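(* Let $ABCD$ be a convex quadrilateral in which no two opposite sides are parallel. If $I_1=I_2$, then $ABCD$ is tangential or cyclic (possibly both, i.e. bicentric).
   Context: Let $E$ be the intersection point of lines $AB$ and $DC$, and $F$ the intersection point of lines $AD$ and $BC$. Let $M,N$ be the midpoints of the diagonals $AC$ and $BD$; the line $MN$ is the Newton line. $I_1$ is the intersection point of the bisector line of the angle $\angle AED$ (the angle at $E$ between rays $EA$ and $ED$) with the line $MN$, and $I_2$ is the intersection point of the bisector line of the angle $\angle AFB$ (the angle at $F$ between rays $FA$ and $FB$) with the line $MN$. A quadrilateral is tangential if it has a circle tangent to all four sides. *)

theory Defs
  imports "HOL-Analysis.Analysis"
begin

definition cross :: "complex \<Rightarrow> complex \<Rightarrow> real" where
  "cross p q = Im (cnj p * q)"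

definition line_through :: "complex \<Rightarrow> complex \<Rightarrow> complex set" where
  "line_through P Q = {X. \<exists>t::real. X = P + of_real t * (Q - P)}"

definition convex_quadrilateral :: "complex \<Rightarrow> complex \<Rightarrow> complex \<Rightarrow> complex \<Rightarrow> bool" where
  "convex_quadrilateral A B C D \<longleftrightarrow>
     (cross (B - A) (C - B) > 0 \<and> cross (C - B) (D - C) > 0 \<and>
      cross (D - C) (A - D) > 0 \<and> cross (A - D) (B - A) > 0) \<or>
     (cross (B - A) (C - B) < 0 \<and> cross (C - B) (D - C) < 0 \<and>
      cross (D - C) (A - D) < 0 \<and> cross (A - D) (B - A) < 0)"

definition parallel :: "complex \<Rightarrow> complex \<Rightarrow> complex \<Rightarrow> complex \<Rightarrow> bool" where
  "parallel P Q R S \<longleftrightarrow> cross (Q - P) (S - R) = 0"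

definition angle_bisector_line :: "complex \<Rightarrow> complex \<Rightarrow> complex \<Rightarrow> complex set" where
  "angle_bisector_line X V Y =
     {P. \<exists>t::real. P = V + of_real t * ((X - V) / of_real (cmod (X - V)) + (Y - V) / of_real (cmod (Y - V)))}"

definition midpoint2 :: "complex \<Rightarrow> complex \<Rightarrow> complex" where
  "midpoint2 P Q = (P + Q) / 2"

definition tangential :: "complex \<Rightarrow> complex \<Rightarrow> complex \<Rightarrow> complex \<Rightarrow> bool" where
  "tangential A B C D \<longleftrightarrow> (\<exists>Z r. r > 0 \<and>
     (\<forall>(P, Q) \<in> {(A, B), (B, C), (C, D), (D, A)}.
        \<exists>T \<in> closed_segment P Q. dist Z T = r \<and> Re (cnj (T - Z) * (Q - P)) = 0))"

definition cyclic :: "complex \<Rightarrow> complex \<Rightarrow> complex \<Rightarrow> complex \<Rightarrow> bool" where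
  "cyclic A B C D \<longleftrightarrow> (\<exists>Z r. dist A Z = r \<and> dist B Z = r \<and> dist C Z = r \<and> dist D Z = r)"

end

theory Submission
  imports Defs
begin

lemma cross_eq: "cross p q = Re p * Im q - Im p * Re q" by (simp add: cross_def)

lemma bis:
 fixes u v E I X Y :: complex and s r t :: real
 assumes X: "X - E = of_real s * u" and Y: "Y - E = of_real r * v" and sr: "s*r < 0"
   and I: "I = E + of_real t * ((X - E)/of_real (cmod (X-E)) + (Y-E)/of_real(cmod(Y-E)))"
 shows "cross u (I-E) * cmod v = cross v (I-E) * cmod u"
proof (cases "u = 0 \<or> v = 0")
  case True then show ?thesis by (auto simp: cross_eq)
next
  case False
  hence u: "cmod u > 0" and v: "cmod v > 0" by auto
  have s0: "s \<noteq> 0" and r0: "r \<noteq> 0" using sr by auto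
  have sg: "s/\<bar>s\<bar> = - (r/\<bar>r\<bar>)" using sr s0 r0
    by (cases "s > 0") (auto simp: mult_less_0_iff)
  define k1 where "k1 = s/(\<bar>s\<bar>*cmod u)"
  define k2 where "k2 = r/(\<bar>r\<bar>*cmod v)"
  have "I - E = of_real t * (of_real k1 * u + of_real k2 * v)"
    unfolding I X Y k1_def k2_def by (simp add: norm_mult)
  hence c1: "cross u (I-E) = t*k2*cross u v" and c2: "cross v (I-E) = t*k1*cross v u"
    by (simp_all add: cross_eq algebra_simps)
  have kk: "k2 * cmod v = - k1 * cmod u" unfolding k1_def k2_def using u v sg by simp
  have cvu: "cross v u = - cross u v" by (simp add: cross_eq)
  have "cross u (I-E) * cmod v = t*(cross u v)*(k2*cmod v)" using c1 by (simp add: mult_ac)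
  also have "\<dots> = t*(cross u v)*(- k1*cmod u)" using kk by simp
  also have "\<dots> = cross v (I-E) * cmod u" using c2 cvu by (simp add: mult_ac)
  finally show ?thesis .
qed
lemma cmod_sq: "(cmod p)^2 = Re p * Re p + Im p * Im p"
  using cmod_power2[of p] by (simp add: power2_eq_square)

definition dot :: "complex \<Rightarrow> complex \<Rightarrow> real" where "dot p q = Re p * Re q + Im p * Im q"

lemma vid: "(cmod q)^2 * cross p q * cross q r =
  cross p q * (- cross q v * dot q r + cross r (v - q) * (cmod q)^2)
  - cross q r * (cross q v * dot p q - cross p v * (cmod q)^2)"
  unfolding cmod_sq by (simp add: cross_eq dot_def algebra_simps)

lemma G1: "cross p q * dot v p = cross p v * dot q p - cross q v * (cmod p)^2"
  unfolding cmod_sq by (simp add: cross_eq dot_def algebra_simps)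

lemma core:
 fixes a b c d x y pA pB pC pD qA qB qC qD :: real
 assumes EA: "a*pA*pB = y*a*(b*pA + d*pB) - x*(qB*pA + qA*pB)"
  and EB: "b*pB*pC = x*b*(c*pB + a*pC) - y*(qC*pB + qB*pC)"
  and EC: "c*pC*pD = y*c*(d*pC + b*pD) - x*(qD*pC + qC*pD)"
  and ED: "d*pD*pA = x*d*(a*pD + c*pA) - y*(qA*pD + qD*pA)"
  and N: "x*(a+c) = y*(b+d)"
 shows "(y^2-x^2)*(qA*pB*pC*pD + pA*qB*pC*pD + pA*pB*qC*pD + pA*pB*pC*qD) = 0"
proof -
  have "0 = (x*(a+c) - y*(b+d))*(pA*pB*pC*pD)" using N by simp
  also have "\<dots> = x*pC*pD*(a*pA*pB) + x*pA*pB*(c*pC*pD) - y*pD*pA*(b*pB*pC) - y*pB*pC*(d*pD*pA)"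
    by (simp add: algebra_simps)
  also have "\<dots> = x*pC*pD*(y*a*(b*pA + d*pB) - x*(qB*pA + qA*pB)) + x*pA*pB*(y*c*(d*pC + b*pD) - x*(qD*pC + qC*pD))
     - y*pD*pA*(x*b*(c*pB + a*pC) - y*(qC*pB + qB*pC)) - y*pB*pC*(x*d*(a*pD + c*pA) - y*(qA*pD + qD*pA))"
    using EA EB EC ED by simp
  also have "\<dots> = (y^2-x^2)*(qA*pB*pC*pD + pA*qB*pC*pD + pA*pB*qC*pD + pA*pB*pC*qD)"
    by (simp add: algebra_simps power2_eq_square)
  finally show ?thesis by simp
qed

lemma ids:
  fixes w1 w2 w3 w4 :: complex
  assumes "w1 + w2 + w3 + w4 = 0"
  shows "cross w4 w1 * cross w2 w3 - cross w1 w2 * cross w3 w4 = - cross w1 w3 * cross w2 w4"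
    "dot w4 w1 * cross w2 w3 + cross w4 w1 * dot w2 w3 = - (dot w1 w2 * cross w3 w4 + cross w1 w2 * dot w3 w4)"
proof -
  have w4: "w4 = -(w1+w2+w3)" using assms by (simp add: algebra_simps eq_neg_iff_add_eq_0)
  show "cross w4 w1 * cross w2 w3 - cross w1 w2 * cross w3 w4 = - cross w1 w3 * cross w2 w4"
    unfolding w4 by (simp add: cross_eq algebra_simps)
  show "dot w4 w1 * cross w2 w3 + cross w4 w1 * dot w2 w3 = - (dot w1 w2 * cross w3 w4 + cross w1 w2 * dot w3 w4)"
    unfolding w4 by (simp add: cross_eq dot_def algebra_simps)
qed
lemma cyc_lemma:
  fixes A B C D :: complex
  assumes J: "dot (A-D) (B-A) * cross (C-B) (D-C) + cross (A-D) (B-A) * dot (C-B) (D-C) = 0"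
    and nd: "cross (B-A) (C-B) \<noteq> 0"
  shows "cyclic A B C D"
proof -
  define bx where "bx = Re B - Re A"
  define "by" where "by = Im B - Im A"
  define cx where "cx = Re C - Re A"
  define cy where "cy = Im C - Im A"
  define dx where "dx = Re D - Re A"
  define dy where "dy = Im D - Im A"
  define dt where "dt = bx*cy - by*cx"
  have dt0: "dt \<noteq> 0" using nd unfolding dt_def bx_def by_def cx_def cy_def
    by (simp add: cross_eq algebra_simps)
  define zx where "zx = ((bx^2+by^2)*cy - (cx^2+cy^2)*by)/(2*dt)"
  define zy where "zy = (bx*(cx^2+cy^2) - cx*(bx^2+by^2))/(2*dt)"
  define Z where "Z = A + Complex zx zy"
  have JJ: "(dx^2+dy^2)*dt - (dx*((bx^2+by^2)*cy - (cx^2+cy^2)*by) + dy*(bx*(cx^2+cy^2) - cx*(bx^2+by^2))) = 0"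
    using J unfolding bx_def by_def cx_def cy_def dx_def dy_def dt_def
    by (simp add: cross_eq dot_def algebra_simps power2_eq_square)
  have gen: "ux*zx + uy*zy = (ux*((bx^2+by^2)*cy - (cx^2+cy^2)*by) + uy*(bx*(cx^2+cy^2) - cx*(bx^2+by^2)))/(2*dt)"
    for ux uy unfolding zx_def zy_def by (simp add: add_divide_distrib)
  have sq: "(ux - zx)^2 + (uy - zy)^2 = zx^2 + zy^2 + (ux^2+uy^2) - 2*(ux*zx+uy*zy)" for ux uy
    by (simp add: power2_eq_square algebra_simps)
  have hb: "bx*zx + by*zy = (bx^2+by^2)/2"
  proof -
    have "bx*((bx^2+by^2)*cy - (cx^2+cy^2)*by) + by*(bx*(cx^2+cy^2) - cx*(bx^2+by^2)) = (bx^2+by^2)*dt"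
      unfolding dt_def by (simp add: algebra_simps power2_eq_square)
    then show ?thesis using gen[of bx "by"] dt0 by simp
  qed
  have hc: "cx*zx + cy*zy = (cx^2+cy^2)/2"
  proof -
    have "cx*((bx^2+by^2)*cy - (cx^2+cy^2)*by) + cy*(bx*(cx^2+cy^2) - cx*(bx^2+by^2)) = (cx^2+cy^2)*dt"
      unfolding dt_def by (simp add: algebra_simps power2_eq_square)
    then show ?thesis using gen[of cx cy] dt0 by simp
  qed
  have hd: "dx*zx + dy*zy = (dx^2+dy^2)/2"
  proof -
    have "dx*((bx^2+by^2)*cy - (cx^2+cy^2)*by) + dy*(bx*(cx^2+cy^2) - cx*(bx^2+by^2)) = (dx^2+dy^2)*dt"
      using JJ by simp
    then show ?thesis using gen[of dx dy] dt0 by simp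
  qed
  have eA: "(cmod (A - Z))^2 = zx^2 + zy^2" unfolding Z_def cmod_sq by (simp add: power2_eq_square)
  have eB: "(cmod (B - Z))^2 = zx^2 + zy^2"
  proof -
    have "(cmod (B - Z))^2 = (bx - zx)^2 + (by - zy)^2" unfolding Z_def cmod_sq bx_def by_def
      by (simp add: power2_eq_square algebra_simps)
    then show ?thesis using sq[of bx "by"] hb by (simp add: field_simps)
  qed
  have eC: "(cmod (C - Z))^2 = zx^2 + zy^2"
  proof -
    have "(cmod (C - Z))^2 = (cx - zx)^2 + (cy - zy)^2" unfolding Z_def cmod_sq cx_def cy_def
      by (simp add: power2_eq_square algebra_simps)
    then show ?thesis using sq[of cx cy] hc by (simp add: field_simps)
  qed
  have eD: "(cmod (D - Z))^2 = zx^2 + zy^2"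
  proof -
    have "(cmod (D - Z))^2 = (dx - zx)^2 + (dy - zy)^2" unfolding Z_def cmod_sq dx_def dy_def
      by (simp add: power2_eq_square algebra_simps)
    then show ?thesis using sq[of dx dy] hd by (simp add: field_simps)
  qed
  have "\<And>X. (cmod (X - Z))^2 = (cmod (A - Z))^2 \<Longrightarrow> dist X Z = dist A Z"
    by (metis dist_norm norm_ge_zero power2_eq_imp_eq)
  then show ?thesis unfolding cyclic_def using eA eB eC eD by metis
qed
lemma dot_le: "dot p q \<le> cmod p * cmod q"
proof -
  have "dot p q = Re (cnj p * q)" by (simp add: dot_def)
  also have "\<dots> \<le> cmod (cnj p * q)" by (rule complex_Re_le_cmod)
  finally show ?thesis by (simp add: norm_mult)
qed

lemma side_tangent:
  fixes P Q R S I :: complex and r :: real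
  assumes h1: "cross (Q-P) (I-P) = r * cmod (Q-P)" and h4: "cross (P-S) (I-S) = r * cmod (P-S)"
    and h2: "cross (R-Q) (I-Q) = r * cmod (R-Q)"
    and o1: "r * cross (P-S) (Q-P) > 0" and o2: "r * cross (Q-P) (R-Q) > 0"
  shows "\<exists>T\<in>closed_segment P Q. dist I T = \<bar>r\<bar> \<and> Re (cnj (T - I) * (Q - P)) = 0"
proof -
  define w where "w = Q - P"
  define w4 where "w4 = P - S"
  define w2 where "w2 = R - Q"
  have w0: "w \<noteq> 0" using o1 unfolding w_def by (auto simp: cross_eq)
  hence nw: "cmod w > 0" by simp
  define \<sigma> where "\<sigma> = dot w (I-P) / (cmod w)^2"
  define T where "T = P + of_real \<sigma> * w"
  have c1: "cross w (I-P) = r * cmod w" using h1 w_def by simp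
  have c4: "cross w4 (I-P) = r * cmod w4" using h4 unfolding w4_def
    by (simp add: cross_eq algebra_simps)
  have c2: "cross w2 (I-Q) = r * cmod w2" using h2 unfolding w2_def by simp
  have c1': "cross w (I-Q) = r * cmod w" using h1 unfolding w_def by (simp add: cross_eq algebra_simps)
  have g1: "cross w w4 * dot (I-P) w = cross w (I-P) * dot w4 w - cross w4 (I-P) * (cmod w)^2" by (rule G1)
  have g2: "cross w w2 * dot (I-Q) w = cross w (I-Q) * dot w2 w - cross w2 (I-Q) * (cmod w)^2" by (rule G1)
  have cs4: "cross w4 w = - cross w w4" and cs2: "cross w w2 = cross w w2" by (simp_all add: cross_eq)
  have e1: "cross w w4 * dot (I-P) w = r * cmod w * dot w4 w - r * cmod w4 * (cmod w)^2"
    using g1 c1 c4 by simp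
  have "(r * cross w4 w) * dot (I-P) w = - r * (cross w w4 * dot (I-P) w)" using cs4 by simp
  also have "\<dots> = (r*r * cmod w) * (cmod w4 * cmod w - dot w4 w)"
    unfolding e1 by (simp add: power2_eq_square algebra_simps)
  finally have p1: "(r * cross w4 w) * dot (I-P) w = (r*r * cmod w) * (cmod w4 * cmod w - dot w4 w)" .
  have "cmod w4 * cmod w - dot w4 w \<ge> 0" using dot_le[of w4 w] by simp
  hence "(r * cross w4 w) * dot (I-P) w \<ge> 0" unfolding p1 using nw by simp
  moreover have "r * cross w4 w > 0" using o1 w_def w4_def by simp
  ultimately have d1: "dot (I-P) w \<ge> 0" by (simp add: zero_le_mult_iff)
  have e2: "cross w w2 * dot (I-Q) w = r * cmod w * dot w2 w - r * cmod w2 * (cmod w)^2"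
    using g2 c1' c2 by simp
  have "(r * cross w w2) * dot (I-Q) w = - ((r*r * cmod w) * (cmod w2 * cmod w - dot w2 w))"
    by (simp add: mult.assoc e2) (simp add: power2_eq_square algebra_simps)
  moreover have "cmod w2 * cmod w - dot w2 w \<ge> 0" using dot_le[of w2 w] by simp
  ultimately have "(r * cross w w2) * dot (I-Q) w \<le> 0" using nw by simp
  moreover have "r * cross w w2 > 0" using o2 w_def w2_def by simp
  ultimately have d2: "dot (I-Q) w \<le> 0"
    using mult_pos_pos[of "r * cross w w2" "dot (I-Q) w"] by linarith
  have dsym: "dot w (I-P) = dot (I-P) w" by (simp add: dot_def mult.commute)
  have dQ: "dot (I-P) w = dot (I-Q) w + (cmod w)^2" unfolding w_def cmod_sq
    by (simp add: dot_def algebra_simps)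
  have s0: "\<sigma> \<ge> 0" unfolding \<sigma>_def using d1 dsym by simp
  have s1: "\<sigma> \<le> 1" unfolding \<sigma>_def using d2 dsym dQ nw by (simp add: divide_le_eq)
  have Tseg: "T \<in> closed_segment P Q"
    unfolding closed_segment_def T_def w_def using s0 s1
    by (auto intro!: exI[of _ \<sigma>] simp: scaleR_conv_of_real algebra_simps)
  have lag: "(cmod w)^2 * (cmod (I-P))^2 = (dot w (I-P))^2 + (cross w (I-P))^2"
    unfolding cmod_sq by (simp add: dot_def cross_eq power2_eq_square algebra_simps)
  have "(cmod (I - T))^2 = (cmod (I-P))^2 - 2*\<sigma>*dot w (I-P) + \<sigma>^2 * (cmod w)^2"
    unfolding T_def cmod_sq by (simp add: dot_def power2_eq_square algebra_simps)
  also have "\<dots> = ((cmod w)^2 * (cmod (I-P))^2 - (dot w (I-P))^2) / (cmod w)^2"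
    unfolding \<sigma>_def using nw by (simp add: field_simps power2_eq_square)
  also have "\<dots> = r^2" using lag nw by (simp add: c1 field_simps power2_eq_square)
  finally have "cmod (I - T) = \<bar>r\<bar>"
    by (metis abs_ge_zero norm_ge_zero power2_abs power2_eq_imp_eq)
  hence dist: "dist I T = \<bar>r\<bar>" by (simp add: dist_norm)
  have "Re (cnj (T - I) * (Q - P)) = \<sigma> * (cmod w)^2 - dot w (I-P)"
    unfolding T_def w_def cmod_sq by (simp add: dot_def algebra_simps)
  also have "\<dots> = 0" unfolding \<sigma>_def using nw by simp
  finally show ?thesis using Tseg dist by blast
qed
lemma vertex_eq:
  fixes P0 P1 P2 P3 I :: complex and x y :: real
  assumes h1: "cross (P1-P0) (I-P0) = x * cmod (P1-P0)"
    and h2: "cross (P2-P1) (I-P1) = y * cmod (P2-P1)"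
    and h4: "cross (P0-P3) (I-P3) = y * cmod (P0-P3)"
    and ne: "P1 \<noteq> P0"
  shows "cmod (P1-P0) * cross (P0-P3) (P1-P0) * cross (P1-P0) (P2-P1) =
    y * cmod (P1-P0) * (cmod (P2-P1) * cross (P0-P3) (P1-P0) + cmod (P0-P3) * cross (P1-P0) (P2-P1))
    - x * (dot (P1-P0) (P2-P1) * cross (P0-P3) (P1-P0) + dot (P0-P3) (P1-P0) * cross (P1-P0) (P2-P1))"
proof -
  define a where "a = cmod (P1-P0)"
  have a0: "a > 0" using ne unfolding a_def by simp
  have V: "(cmod (P1-P0))^2 * cross (P0-P3) (P1-P0) * cross (P1-P0) (P2-P1) =
    cross (P0-P3) (P1-P0) * (- cross (P1-P0) (I-P0) * dot (P1-P0) (P2-P1) + cross (P2-P1) ((I-P0) - (P1-P0)) * (cmod (P1-P0))^2)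
    - cross (P1-P0) (P2-P1) * (cross (P1-P0) (I-P0) * dot (P0-P3) (P1-P0) - cross (P0-P3) (I-P0) * (cmod (P1-P0))^2)"
    by (rule vid)
  have e1: "(I-P0) - (P1-P0) = I - P1" by simp
  have e2: "cross (P0-P3) (I-P0) = cross (P0-P3) (I-P3)" by (simp add: cross_eq algebra_simps)
  have "a * (a * cross (P0-P3) (P1-P0) * cross (P1-P0) (P2-P1)) =
    a * (y * a * (cmod (P2-P1) * cross (P0-P3) (P1-P0) + cmod (P0-P3) * cross (P1-P0) (P2-P1))
    - x * (dot (P1-P0) (P2-P1) * cross (P0-P3) (P1-P0) + dot (P0-P3) (P1-P0) * cross (P1-P0) (P2-P1)))"
    using V unfolding e1 e2 h1 h2 h4 a_def[symmetric] by (simp add: power2_eq_square algebra_simps)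
  then show ?thesis using a0 unfolding a_def[symmetric] by simp
qed

theorem theorem8:
  fixes A B C D E F :: complex
  assumes convex: "convex_quadrilateral A B C D"
    and npar1: "\<not> parallel A B D C"
    and npar2: "\<not> parallel A D B C"
    and E: "E \<in> line_through A B" "E \<in> line_through D C"
    and F: "F \<in> line_through A D" "F \<in> line_through B C"
    and I12: "\<exists>I. angle_bisector_line A E D \<inter> line_through (midpoint2 A C) (midpoint2 B D) = {I}
                 \<and> angle_bisector_line A F B \<inter> line_through (midpoint2 A C) (midpoint2 B D) = {I}"
  shows "tangential A B C D \<or> cyclic A B C D"
proof -
  define w1 where "w1 = B - A"
  define w2 where "w2 = C - B"
  define w3 where "w3 = D - C"
  define w4 where "w4 = A - D"
  define pA where "pA = cross w4 w1"
  define pB where "pB = cross w1 w2"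
  define pC where "pC = cross w2 w3"
  define pD where "pD = cross w3 w4"
  define X where "X = cross w1 w3"
  define Y where "Y = cross w2 w4"
  have sgn: "(pA > 0 \<and> pB > 0 \<and> pC > 0 \<and> pD > 0) \<or> (pA < 0 \<and> pB < 0 \<and> pC < 0 \<and> pD < 0)"
    using convex unfolding convex_quadrilateral_def pA_def pB_def pC_def pD_def w1_def w2_def w3_def w4_def
    by auto
  have X0: "X \<noteq> 0" using npar1 unfolding parallel_def X_def w1_def w3_def by (simp add: cross_eq algebra_simps)
  have Y0: "Y \<noteq> 0" using npar2 unfolding parallel_def Y_def w2_def w4_def by (simp add: cross_eq algebra_simps)
  obtain I where I1: "I \<in> angle_bisector_line A E D" and I2: "I \<in> angle_bisector_line A F B"
    and IN: "I \<in> line_through (midpoint2 A C) (midpoint2 B D)" using I12 by blast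
  obtain s1 where s1: "E = A + of_real s1 * (B - A)" using E(1) unfolding line_through_def by blast
  obtain r1 where r1: "E = D + of_real r1 * (C - D)" using E(2) unfolding line_through_def by blast
  obtain sF where sF: "F = A + of_real sF * (D - A)" using F(1) unfolding line_through_def by blast
  obtain rF where rF: "F = B + of_real rF * (C - B)" using F(2) unfolding line_through_def by blast
  have eqE: "A - D = - of_real s1 * w1 - of_real r1 * w3" using s1 r1 unfolding w1_def w3_def
    by (simp add: algebra_simps)
  have eqF: "A - B = of_real rF * w2 + of_real sF * w4" using sF rF unfolding w2_def w4_def
    by (simp add: algebra_simps)
  have w4E: "w4 = - of_real s1 * w1 - of_real r1 * w3" using eqE unfolding w4_def .
  have pAr: "pA = r1 * X" unfolding pA_def X_def w4E by (simp add: cross_eq algebra_simps)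
  have pDs: "pD = s1 * X" unfolding pD_def X_def w4E by (simp add: cross_eq algebra_simps)
  have w1F: "w1 = - (of_real rF * w2 + of_real sF * w4)" using eqF unfolding w1_def by (simp add: algebra_simps)
  have pAr': "pA = rF * Y" unfolding pA_def Y_def w1F by (simp add: cross_eq algebra_simps)
  have pBs: "pB = sF * Y" unfolding pB_def Y_def w1F by (simp add: cross_eq algebra_simps)
  have pp: "pA * pD > 0" "pA * pB > 0" using sgn by (auto simp: mult_pos_pos mult_neg_neg)
  have sr1: "(- s1) * r1 < 0"
  proof -
    have "pA * pD = (s1 * r1) * X^2" using pAr pDs by (simp add: power2_eq_square algebra_simps)
    with pp have "s1 * r1 > 0" using X0 by (simp add: zero_less_mult_iff)
    thus ?thesis by simp
  qed
  have srF: "sF * (- rF) < 0"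
  proof -
    have "pA * pB = (sF * rF) * Y^2" using pAr' pBs by (simp add: power2_eq_square algebra_simps)
    with pp have "sF * rF > 0" using Y0 by (simp add: zero_less_mult_iff)
    thus ?thesis by simp
  qed
  define l1 where "l1 = cross w1 (I - A)"
  define l2 where "l2 = cross w2 (I - B)"
  define l3 where "l3 = cross w3 (I - C)"
  define l4 where "l4 = cross w4 (I - D)"
  define a where "a = cmod w1"
  define b where "b = cmod w2"
  define c where "c = cmod w3"
  define d where "d = cmod w4"
  obtain tE where tE: "I = E + of_real tE * ((A - E) / of_real (cmod (A - E)) + (D - E) / of_real (cmod (D - E)))"
    using I1 unfolding angle_bisector_line_def by blast
  obtain tF where tF: "I = F + of_real tF * ((A - F) / of_real (cmod (A - F)) + (B - F) / of_real (cmod (B - F)))"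
    using I2 unfolding angle_bisector_line_def by blast
  have bE: "cross w1 (I-E) * cmod w3 = cross w3 (I-E) * cmod w1"
    by (rule bis[OF _ _ sr1 tE]) (simp add: s1 w1_def algebra_simps, simp add: r1 w3_def algebra_simps)
  have bF: "cross w4 (I-F) * cmod w2 = cross w2 (I-F) * cmod w4"
    by (rule bis[OF _ _ srF tF]) (simp add: sF w4_def algebra_simps, simp add: rF w2_def algebra_simps)
  have "cross w1 (I-E) = l1" unfolding l1_def s1 w1_def by (simp add: cross_eq algebra_simps)
  moreover have "cross w3 (I-E) = l3" unfolding l3_def r1 w3_def by (simp add: cross_eq algebra_simps)
  ultimately have L13: "l1 * c = l3 * a" using bE unfolding a_def c_def by simp
  have "cross w4 (I-F) = l4" unfolding l4_def sF w4_def by (simp add: cross_eq algebra_simps)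
  moreover have "cross w2 (I-F) = l2" unfolding l2_def rF w2_def by (simp add: cross_eq algebra_simps)
  ultimately have L24: "l4 * b = l2 * d" using bF unfolding b_def d_def by simp
  obtain tau where tau: "I = midpoint2 A C + of_real tau * (midpoint2 B D - midpoint2 A C)"
    using IN unfolding line_through_def by blast
  have newton: "l1 + l3 = l2 + l4" unfolding l1_def l2_def l3_def l4_def tau midpoint2_def
    w1_def w2_def w3_def w4_def by (simp add: cross_eq field_simps)
  have area: "l1 + l2 + l3 + l4 = pB + pD" unfolding l1_def l2_def l3_def l4_def pB_def pD_def
    w1_def w2_def w3_def w4_def by (simp add: cross_eq algebra_simps)
  have nz: "w1 \<noteq> 0" "w2 \<noteq> 0" "w3 \<noteq> 0" "w4 \<noteq> 0"
    using sgn unfolding pA_def pB_def pC_def pD_def by (auto simp: cross_eq)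
  hence ap: "a > 0" "b > 0" "c > 0" "d > 0" unfolding a_def b_def c_def d_def by auto
  define x where "x = l1 / a"
  define y where "y = l2 / b"
  have l1x: "l1 = x * a" unfolding x_def using ap by simp
  have l2y: "l2 = y * b" unfolding y_def using ap by simp
  have l3x: "l3 = x * c" using L13 ap unfolding x_def by (simp add: field_simps)
  have l4y: "l4 = y * d" using L24 ap unfolding y_def by (simp add: field_simps)
  have N: "x*(a+c) = y*(b+d)" using newton l1x l2y l3x l4y by (simp add: algebra_simps)
  have H: "2*(x*(a+c)) = pB + pD" using area N l1x l2y l3x l4y by (simp add: algebra_simps)
  have "(x > 0 \<and> y > 0 \<and> pA > 0 \<and> pB > 0 \<and> pC > 0 \<and> pD > 0) \<or> (x < 0 \<and> y < 0 \<and> pA < 0 \<and> pB < 0 \<and> pC < 0 \<and> pD < 0)"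
  proof (cases "pA > 0")
    case True
    with sgn have p: "pB > 0" "pC > 0" "pD > 0" "pA > 0" by auto
    hence "x*(a+c) > 0" "y*(b+d) > 0" using H N by auto
    hence "x > 0" "y > 0" using ap by (auto simp: zero_less_mult_iff)
    thus ?thesis using p by auto
  next
    case False
    with sgn have p: "pB < 0" "pC < 0" "pD < 0" "pA < 0" by auto
    hence "x*(a+c) < 0" "y*(b+d) < 0" using H N by auto
    hence "x < 0" "y < 0" using ap by (auto simp: mult_less_0_iff)
    thus ?thesis using p by auto
  qed
  hence sx: "x*pA > 0" "x*pB > 0" "x*pC > 0" "x*pD > 0" and xy: "x + y \<noteq> 0"
    by (auto simp: mult_pos_pos mult_neg_neg)
  have c1: "cross (B-A) (I-A) = x * cmod (B-A)" using l1x unfolding l1_def w1_def a_def .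
  have c2: "cross (C-B) (I-B) = y * cmod (C-B)" using l2y unfolding l2_def w2_def b_def .
  have c3: "cross (D-C) (I-C) = x * cmod (D-C)" using l3x unfolding l3_def w3_def c_def .
  have c4: "cross (A-D) (I-D) = y * cmod (A-D)" using l4y unfolding l4_def w4_def d_def .
  show ?thesis
  proof (cases "x = y")
    case True
    have o: "x * cross (A-D) (B-A) > 0" "x * cross (B-A) (C-B) > 0" "x * cross (C-B) (D-C) > 0"
      "x * cross (D-C) (A-D) > 0"
      using sx unfolding pA_def pB_def pC_def pD_def w1_def w2_def w3_def w4_def by auto
    have "tangential A B C D"
      unfolding tangential_def
    proof (intro exI[of _ I] exI[of _ "\<bar>x\<bar>"] conjI)
      show "\<bar>x\<bar> > 0" using sx by auto
      have t1: "\<exists>T\<in>closed_segment A B. dist I T = \<bar>x\<bar> \<and> Re (cnj (T - I) * (B - A)) = 0"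
        by (rule side_tangent[where P=A and Q=B and S=D and R=C and I=I and r=x]) (use c1 c2 c4 o True in auto)
      have t2: "\<exists>T\<in>closed_segment B C. dist I T = \<bar>x\<bar> \<and> Re (cnj (T - I) * (C - B)) = 0"
        by (rule side_tangent[where P=B and Q=C and S=A and R=D and I=I and r=x]) (use c1 c2 c3 o True in auto)
      have t3: "\<exists>T\<in>closed_segment C D. dist I T = \<bar>x\<bar> \<and> Re (cnj (T - I) * (D - C)) = 0"
        by (rule side_tangent[where P=C and Q=D and S=B and R=A and I=I and r=x]) (use c2 c3 c4 o True in auto)
      have t4: "\<exists>T\<in>closed_segment D A. dist I T = \<bar>x\<bar> \<and> Re (cnj (T - I) * (A - D)) = 0"
        by (rule side_tangent[where P=D and Q=A and S=C and R=B and I=I and r=x]) (use c1 c3 c4 o True in auto)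
      show "\<forall>(P, Q)\<in>{(A, B), (B, C), (C, D), (D, A)}.
        \<exists>T\<in>closed_segment P Q. dist I T = \<bar>x\<bar> \<and> Re (cnj (T - I) * (Q - P)) = 0"
        using t1 t2 t3 t4 by auto
    qed
    thus ?thesis by simp
  next
    case False
    have EA: "a*pA*pB = y*a*(b*pA + d*pB) - x*(dot w1 w2*pA + dot w4 w1*pB)"
      using vertex_eq[OF c1 c2 c4] nz unfolding a_def b_def d_def pA_def pB_def w1_def w2_def w4_def by simp
    have EB: "b*pB*pC = x*b*(c*pB + a*pC) - y*(dot w2 w3*pB + dot w1 w2*pC)"
      using vertex_eq[OF c2 c3 c1] nz unfolding a_def b_def c_def pC_def pB_def w1_def w2_def w3_def by simp
    have EC: "c*pC*pD = y*c*(d*pC + b*pD) - x*(dot w3 w4*pC + dot w2 w3*pD)"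
      using vertex_eq[OF c3 c4 c2] nz unfolding d_def b_def c_def pC_def pD_def w4_def w2_def w3_def by simp
    have ED: "d*pD*pA = x*d*(a*pD + c*pA) - y*(dot w4 w1*pD + dot w3 w4*pA)"
      using vertex_eq[OF c4 c1 c3] nz unfolding a_def d_def c_def pA_def pD_def w1_def w4_def w3_def by simp
    have "(y^2-x^2)*(dot w4 w1*pB*pC*pD + pA*dot w1 w2*pC*pD + pA*pB*dot w2 w3*pD + pA*pB*pC*dot w3 w4) = 0"
      by (rule core[OF EA EB EC ED N])
    moreover have "y^2 - x^2 \<noteq> 0" using False xy
      by (metis (no_types, opaque_lifting) add.commute diff_self eq_iff_diff_eq_0 mult_eq_0_iff power2_eq_square square_diff_square_factored)
    ultimately have S: "dot w4 w1*pB*pC*pD + pA*dot w1 w2*pC*pD + pA*pB*dot w2 w3*pD + pA*pB*pC*dot w3 w4 = 0" by simp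
    have wsum: "w1 + w2 + w3 + w4 = 0" unfolding w1_def w2_def w3_def w4_def by simp
    note I1 = ids(1)[OF wsum] and I2 = ids(2)[OF wsum]
    define J where "J = dot w4 w1 * pC + pA * dot w2 w3"
    have "dot w4 w1*pB*pC*pD + pA*dot w1 w2*pC*pD + pA*pB*dot w2 w3*pD + pA*pB*pC*dot w3 w4
       = pB*pD*J + pA*pC*(dot w1 w2 * pD + pB * dot w3 w4)" unfolding J_def by (simp add: algebra_simps)
    also have "\<dots> = J * (pB*pD - pA*pC)"
    proof -
      have K: "dot w1 w2 * pD + pB * dot w3 w4 = - J" using I2 unfolding J_def pA_def pB_def pC_def pD_def
        by (simp add: algebra_simps)
      show ?thesis unfolding K by (simp add: algebra_simps)
    qed
    also have "\<dots> = J * (X*Y)"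
    proof -
      have "pB*pD - pA*pC = X*Y" using I1 unfolding pA_def pB_def pC_def pD_def X_def Y_def
        by (simp add: algebra_simps)
      thus ?thesis by simp
    qed
    finally have "J = 0" using S X0 Y0 by simp
    hence "cyclic A B C D"
      by (intro cyc_lemma) (use sx in \<open>auto simp: J_def pA_def pB_def pC_def w1_def w2_def w3_def w4_def\<close>)
    thus ?thesis by simp
  qed
qed
end
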